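(* Let $G$ be a finitely generated group with finite symmetric generating set $S$, and $H\subset G$ a finite index subgroup. For any subset $A\subseteq G/H$, $$\operatorname{sw}(A)\le 6+2\sum_{k=1}^{\infty}\Phi_G\!\left(\tfrac14\left(\tfrac34\right)^k|A|\right)\left(\tfrac34\right)^k|A|.$$
   Context: $G$ carries its Cayley graph structure (an edge between $g$ and $sg$, $s\in S$, $sg\ne g$) and $G/H$ its Schreier graph structure (vertices the cosets $gH$; an edge between distinct cosets $x,y$ iff $y=sx$ for some $s\in S$). For a vertex set $F$ of a graph, $\partial F$ is the set of edges from $F$ to its complement. The Folner profile of $G$ is $\Phi_G(V)=\min\{|\partial F|/|F|: F\subseteq G \text{ finite nonempty}, |F|\le\max(V,1)\}$ for $V>0$ (so $\Phi_G$ is non-increasing and $\Phi_G(V)=\Phi_G(1)$ for $V<1$). For disjoint vertex sets $B_1,B_2$, $E(B_1,B_2)$ is the set of edges between them. A sweepout of a finite vertex set $A$ is a nested sequence $\emptyset=F_0\subseteq\dots\subseteq F_{|A|}=A$ with $|F_j|=j$, of width $\max_j|E(F_j,A\setminus F_j)|$; $\operatorname{sw}(A)$ is the minimum width over all sweepouts of $A$. *)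

theory Defs
  imports "HOL-Algebra.Left_Coset" "HOL-Algebra.Generated_Groups" Complex_Main
begin

definition cayley_edges :: "('g, 'm) monoid_scheme \<Rightarrow> 'g set \<Rightarrow> 'g set set" where
  "cayley_edges G S = {{g, s \<otimes>\<^bsub>G\<^esub> g} | g s. g \<in> carrier G \<and> s \<in> S \<and> s \<otimes>\<^bsub>G\<^esub> g \<noteq> g}"

definition schreier_edges :: "('g, 'm) monoid_scheme \<Rightarrow> 'g set \<Rightarrow> 'g set \<Rightarrow> 'g set set set" where
  "schreier_edges G S H = {{x, s <#\<^bsub>G\<^esub> x} | x s. x \<in> lcosets\<^bsub>G\<^esub> H \<and> s \<in> S \<and> s <#\<^bsub>G\<^esub> x \<noteq> x}"

definition edge_boundary :: "'v set set \<Rightarrow> 'v set \<Rightarrow> 'v set set" where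
  "edge_boundary E F = {e \<in> E. \<exists>u v. e = {u, v} \<and> u \<in> F \<and> v \<notin> F}"

definition edges_between :: "'v set set \<Rightarrow> 'v set \<Rightarrow> 'v set \<Rightarrow> 'v set set" where
  "edges_between E B1 B2 = {e \<in> E. \<exists>u\<in>B1. \<exists>v\<in>B2. e = {u, v}}"

definition folner_profile :: "('g, 'm) monoid_scheme \<Rightarrow> 'g set \<Rightarrow> real \<Rightarrow> real" where
  "folner_profile G S V = Inf {real (card (edge_boundary (cayley_edges G S) F)) / real (card F) | F.
      F \<subseteq> carrier G \<and> finite F \<and> F \<noteq> {} \<and> real (card F) \<le> max V 1}"

definition is_sweepout :: "'v set \<Rightarrow> (nat \<Rightarrow> 'v set) \<Rightarrow> bool" where
  "is_sweepout A F \<longleftrightarrow> F 0 = {} \<and> F (card A) = A \<and>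
     (\<forall>j < card A. F j \<subseteq> F (Suc j)) \<and> (\<forall>j \<le> card A. card (F j) = j)"

definition sweepout_width :: "'v set set \<Rightarrow> 'v set \<Rightarrow> (nat \<Rightarrow> 'v set) \<Rightarrow> nat" where
  "sweepout_width E A F = Max {card (edges_between E (F j) (A - F j)) | j. j \<le> card A}"

definition sweepwidth :: "'v set set \<Rightarrow> 'v set \<Rightarrow> nat" where
  "sweepwidth E A = Inf {sweepout_width E A F | F. is_sweepout A F}"

end

theory Submission
  imports Defs
begin


lemma finite_edges_between:
  assumes "finite X" "finite Y"
  shows "finite (edges_between E X Y)"
proof -
  have "edges_between E X Y \<subseteq> (\<lambda>(u,v). {u,v}) ` (X \<times> Y)"
    unfolding edges_between_def by auto
  thus ?thesis using assms by (meson finite_SigmaI finite_imageI finite_subset)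
qed

lemma card_edges_between_le:
  assumes "finite X" "finite Y"
  shows "card (edges_between E X Y) \<le> card X * card Y"
proof -
  have "edges_between E X Y \<subseteq> (\<lambda>(u,v). {u,v}) ` (X \<times> Y)"
    unfolding edges_between_def by auto
  hence "card (edges_between E X Y) \<le> card ((\<lambda>(u,v). {u,v}) ` (X \<times> Y))"
    using assms by (intro card_mono) auto
  also have "\<dots> \<le> card (X \<times> Y)" by (rule card_image_le) (use assms in auto)
  finally show ?thesis by (simp add: card_cartesian_product)
qed

lemma edges_between_mono:
  assumes "X \<subseteq> X'" "Y \<subseteq> Y'" "finite X'" "finite Y'"
  shows "card (edges_between E X Y) \<le> card (edges_between E X' Y')"
  using assms by (intro card_mono finite_edges_between) (auto simp: edges_between_def)

lemma edges_between_Un2: "edges_between E X (Y \<union> Z) = edges_between E X Y \<union> edges_between E X Z"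
  by (auto simp: edges_between_def)

lemma edges_between_Un1: "edges_between E (X \<union> Y) Z = edges_between E X Z \<union> edges_between E Y Z"
  by (auto simp: edges_between_def)

lemma sweepout_mono:
  assumes "is_sweepout A F" "i \<le> k" "k \<le> card A"
  shows "F i \<subseteq> F k"
  using assms(2,3)
proof (induction k)
  case 0 thus ?case by simp
next
  case (Suc k)
  show ?case
  proof (cases "i = Suc k")
    case False
    hence "F i \<subseteq> F k" using Suc by auto
    moreover have "F k \<subseteq> F (Suc k)" using assms(1) Suc.prems unfolding is_sweepout_def by auto
    ultimately show ?thesis by blast
  qed simp
qed

lemma sweepout_sub:
  assumes "is_sweepout A F" "j \<le> card A"
  shows "F j \<subseteq> A"
  using sweepout_mono[OF assms(1) assms(2) order_refl] assms(1) unfolding is_sweepout_def by simp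

lemma sweepout_exists:
  assumes "finite A"
  shows "\<exists>F. is_sweepout A F"
proof -
  obtain xs where xs: "set xs = A" "distinct xs" using finite_distinct_list[OF assms] by blast
  have len: "length xs = card A" using xs distinct_card by fastforce
  have "is_sweepout A (\<lambda>j. set (take j xs))"
    unfolding is_sweepout_def
  proof (intro conjI allI impI)
    show "set (take (card A) xs) = A" using len xs by simp
    fix j assume "j < card A" thus "set (take j xs) \<subseteq> set (take (Suc j) xs)"
      by (simp add: set_take_subset_set_take)
  next
    fix j assume "j \<le> card A"
    thus "card (set (take j xs)) = j" using len xs
      by (simp add: distinct_card)
  qed simp
  thus ?thesis by blast
qed

lemma width_le:
  assumes "\<And>j. j \<le> card A \<Longrightarrow> card (edges_between E (F j) (A - F j)) \<le> w"
  shows "sweepout_width E A F \<le> w"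
proof -
  have eq: "{card (edges_between E (F j) (A - F j)) | j. j \<le> card A}
     = (\<lambda>j. card (edges_between E (F j) (A - F j))) ` {..card A}" by auto
  show ?thesis unfolding sweepout_width_def eq
    using assms by (subst Max_le_iff) auto
qed

lemma width_ge:
  assumes "j \<le> card A"
  shows "card (edges_between E (F j) (A - F j)) \<le> sweepout_width E A F"
proof -
  have eq: "{card (edges_between E (F j) (A - F j)) | j. j \<le> card A}
     = (\<lambda>j. card (edges_between E (F j) (A - F j))) ` {..card A}" by auto
  show ?thesis unfolding sweepout_width_def eq
    using assms by (intro Max_ge) auto
qed

lemma sweepwidth_le:
  assumes "is_sweepout A F"
  shows "sweepwidth E A \<le> sweepout_width E A F"
  unfolding sweepwidth_def using assms
  by (intro cInf_lower) auto

lemma sweepwidth_attained: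
  assumes "finite A"
  shows "\<exists>F. is_sweepout A F \<and> sweepwidth E A = sweepout_width E A F"
proof -
  obtain F0 where "is_sweepout A F0" using sweepout_exists[OF assms] by blast
  hence ne: "{sweepout_width E A F | F. is_sweepout A F} \<noteq> {}" by blast
  have "sweepwidth E A \<in> {sweepout_width E A F | F. is_sweepout A F}"
    unfolding sweepwidth_def by (rule Inf_nat_def1[OF ne])
  thus ?thesis by auto
qed

lemma sweepwidth_small:
  assumes "finite A" "card A \<le> 5"
  shows "sweepwidth E A \<le> 6"
proof -
  obtain F where F: "is_sweepout A F" using sweepout_exists[OF assms(1)] by blast
  have "sweepout_width E A F \<le> 6"
  proof (rule width_le)
    fix j assume j: "j \<le> card A"
    have sub: "F j \<subseteq> A" by (rule sweepout_sub[OF F j])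
    have cj: "card (F j) = j" using F j unfolding is_sweepout_def by auto
    have fin: "finite (F j)" using sub assms(1) finite_subset by blast
    have "card (edges_between E (F j) (A - F j)) \<le> card (F j) * card (A - F j)"
      using assms(1) fin by (intro card_edges_between_le) auto
    also have "\<dots> = j * (card A - j)" using cj sub fin by (simp add: card_Diff_subset)
    also have "\<dots> \<le> 6"
    proof -
      have "card A \<in> {0,1,2,3,4,5}" using assms(2) by auto
      moreover have "j \<in> {0,1,2,3,4,5}" using j assms(2) by auto
      ultimately show ?thesis using j by auto
    qed
    finally show "card (edges_between E (F j) (A - F j)) \<le> 6" .
  qed
  thus ?thesis using sweepwidth_le[OF F, of E] by simp
qed

lemma sweepwidth_split:
  assumes fin: "finite B1" "finite B2" and disj: "B1 \<inter> B2 = {}"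
  shows "sweepwidth E (B1 \<union> B2) \<le> max (sweepwidth E B1) (sweepwidth E B2) + card (edges_between E B1 B2)"
proof -
  obtain F1 where F1: "is_sweepout B1 F1" "sweepwidth E B1 = sweepout_width E B1 F1"
    using sweepwidth_attained[OF fin(1)] by blast
  obtain F2 where F2: "is_sweepout B2 F2" "sweepwidth E B2 = sweepout_width E B2 F2"
    using sweepwidth_attained[OF fin(2)] by blast
  define n1 where "n1 = card B1"
  define n2 where "n2 = card B2"
  define F where "F j = (if j \<le> n1 then F1 j else B1 \<union> F2 (j - n1))" for j
  have cU: "card (B1 \<union> B2) = n1 + n2" unfolding n1_def n2_def using fin disj card_Un_disjoint by blast
  have F1B: "F1 j \<subseteq> B1" if "j \<le> n1" for j using sweepout_sub[OF F1(1)] that n1_def by auto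
  have F2B: "F2 j \<subseteq> B2" if "j \<le> n2" for j using sweepout_sub[OF F2(1)] that n2_def by auto
  have F1n: "F1 n1 = B1" and F20: "F2 0 = {}" and F2n: "F2 n2 = B2"
    using F1(1) F2(1) unfolding is_sweepout_def n1_def n2_def by auto
  have sw: "is_sweepout (B1 \<union> B2) F"
    unfolding is_sweepout_def cU
  proof (intro conjI allI impI)
    show "F 0 = {}" using F1(1) unfolding F_def is_sweepout_def by simp
    show "F (n1 + n2) = B1 \<union> B2"
      using F1n F2n F20 F2B[of n2] by (cases "n2 = 0") (auto simp: F_def)
    fix j assume j: "j < n1 + n2"
    show "F j \<subseteq> F (Suc j)"
    proof (cases "Suc j \<le> n1")
      case True thus ?thesis using F1(1) unfolding F_def is_sweepout_def n1_def by auto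
    next
      case False
      show ?thesis
      proof (cases "j = n1")
        case True thus ?thesis unfolding F_def using F1n by auto
      next
        case False
        hence "j - n1 < n2" "Suc j - n1 = Suc (j - n1)" using j \<open>\<not> Suc j \<le> n1\<close> by auto
        thus ?thesis using F2(1) \<open>\<not> Suc j \<le> n1\<close> False unfolding F_def is_sweepout_def n2_def by auto
      qed
    qed
  next
    fix j assume j: "j \<le> n1 + n2"
    show "card (F j) = j"
    proof (cases "j \<le> n1")
      case True thus ?thesis using F1(1) unfolding F_def is_sweepout_def n1_def by auto
    next
      case False
      hence "j - n1 \<le> n2" using j by auto
      hence "card (F2 (j - n1)) = j - n1" "F2 (j - n1) \<subseteq> B2"
        using F2(1) F2B unfolding is_sweepout_def n2_def by auto
      moreover have "finite (F2 (j - n1))" using calculation(2) fin(2) finite_subset by blast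
      ultimately have "card (B1 \<union> F2 (j - n1)) = n1 + (j - n1)"
        using disj fin unfolding n1_def by (subst card_Un_disjoint) auto
      thus ?thesis using False unfolding F_def by auto
    qed
  qed
  define c where "c = card (edges_between E B1 B2)"
  have "sweepout_width E (B1 \<union> B2) F \<le> max (sweepwidth E B1) (sweepwidth E B2) + c"
  proof (rule width_le)
    fix j assume "j \<le> card (B1 \<union> B2)"
    hence j: "j \<le> n1 + n2" using cU by simp
    show "card (edges_between E (F j) (B1 \<union> B2 - F j)) \<le> max (sweepwidth E B1) (sweepwidth E B2) + c"
    proof (cases "j \<le> n1")
      case True
      have sub: "F1 j \<subseteq> B1" using F1B True by auto
      have fj: "finite (F1 j)" using sub fin finite_subset by blast
      have "B1 \<union> B2 - F j = (B1 - F1 j) \<union> B2" using True sub disj unfolding F_def by auto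
      hence "card (edges_between E (F j) (B1 \<union> B2 - F j))
          = card (edges_between E (F1 j) (B1 - F1 j) \<union> edges_between E (F1 j) B2)"
        using True unfolding F_def by (simp add: edges_between_Un2)
      also have "\<dots> \<le> card (edges_between E (F1 j) (B1 - F1 j)) + card (edges_between E (F1 j) B2)"
        by (rule card_Un_le)
      also have "card (edges_between E (F1 j) (B1 - F1 j)) \<le> sweepwidth E B1"
        using F1(2) width_ge True n1_def by metis
      also have "card (edges_between E (F1 j) B2) \<le> c"
        unfolding c_def using sub fin by (intro edges_between_mono) auto
      finally show ?thesis by simp
    next
      case False
      define i where "i = j - n1"
      have i: "i \<le> n2" using j False i_def by auto
      have sub: "F2 i \<subseteq> B2" using F2B i by auto
      have fi: "finite (F2 i)" using sub fin finite_subset by blast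
      have Fj: "F j = B1 \<union> F2 i" using False unfolding F_def i_def by auto
      have "B1 \<union> B2 - F j = B2 - F2 i" using Fj disj sub by auto
      hence "card (edges_between E (F j) (B1 \<union> B2 - F j))
          = card (edges_between E B1 (B2 - F2 i) \<union> edges_between E (F2 i) (B2 - F2 i))"
        using Fj by (simp add: edges_between_Un1)
      also have "\<dots> \<le> card (edges_between E B1 (B2 - F2 i)) + card (edges_between E (F2 i) (B2 - F2 i))"
        by (rule card_Un_le)
      also have "card (edges_between E (F2 i) (B2 - F2 i)) \<le> sweepwidth E B2"
        using F2(2) width_ge i n2_def by metis
      also have "card (edges_between E B1 (B2 - F2 i)) \<le> c"
        unfolding c_def using sub fin by (intro edges_between_mono) auto
      finally show ?thesis by simp
    qed
  qed
  thus ?thesis using sweepwidth_le[OF sw, of E] c_def by simp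
qed



locale sw_setup = group G for G :: "('g, 'm) monoid_scheme" (structure) +
  fixes S H :: "'g set"
  assumes finS: "finite S" and SG: "S \<subseteq> carrier G" and Sinv: "\<forall>s\<in>S. inv s \<in> S"
    and Hsub: "subgroup H G" and finL: "finite (lcosets H)"
begin

abbreviation "SE \<equiv> schreier_edges G S H"
abbreviation "BF F \<equiv> edge_boundary (cayley_edges G S) F"

lemma L_carrier: "y \<in> lcosets H \<Longrightarrow> y \<subseteq> carrier G"
  unfolding LCOSETS_def using l_coset_subset_G subgroup.subset[OF Hsub] by auto

lemma L_mult: assumes "g \<in> carrier G" "y \<in> lcosets H" shows "g <# y \<in> lcosets H"
proof -
  obtain a where a: "a \<in> carrier G" "y = a <# H" using assms(2) unfolding LCOSETS_def by auto
  have "g <# y = (g \<otimes> a) <# H" using a assms(1) lcos_m_assoc subgroup.subset[OF Hsub] by auto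
  thus ?thesis using a assms(1) unfolding LCOSETS_def by auto
qed

lemma L_assoc: assumes "g \<in> carrier G" "h \<in> carrier G" "y \<in> lcosets H"
  shows "g <# (h <# y) = (g \<otimes> h) <# y"
  using lcos_m_assoc L_carrier assms by auto

lemma L_inv: assumes "g \<in> carrier G" "y \<in> lcosets H" shows "inv g <# (g <# y) = y"
  using L_assoc[of "inv g" g y] assms lcos_mult_one L_carrier by simp

lemma L_inv2: assumes "g \<in> carrier G" "y \<in> lcosets H" shows "g <# (inv g <# y) = y"
  using L_assoc[of g "inv g" y] assms lcos_mult_one L_carrier by simp

lemma BF_sub:
  "BF F \<subseteq> (\<lambda>(f,s). {f, s \<otimes> f}) ` (F \<times> S) \<union> (\<lambda>(f,s). {f, inv s \<otimes> f}) ` (F \<times> S)"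
proof
  fix c assume c: "c \<in> BF F"
  then obtain g s where gs: "c = {g, s \<otimes> g}" "g \<in> carrier G" "s \<in> S"
    unfolding edge_boundary_def cayley_edges_def by auto
  obtain u v where uv: "c = {u, v}" "u \<in> F" "v \<notin> F" using c unfolding edge_boundary_def by auto
  have sc: "s \<in> carrier G" using gs SG by auto
  have "u = g \<or> u = s \<otimes> g" using uv gs by auto
  thus "c \<in> (\<lambda>(f,s). {f, s \<otimes> f}) ` (F \<times> S) \<union> (\<lambda>(f,s). {f, inv s \<otimes> f}) ` (F \<times> S)"
  proof
    assume "u = g" thus ?thesis using gs uv by auto
  next
    assume u: "u = s \<otimes> g"
    have "inv s \<otimes> u = g" using u sc gs(2) by (simp add: m_assoc[symmetric])
    hence "c = {u, inv s \<otimes> u}" using gs u by auto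
    thus ?thesis using uv gs by auto
  qed
qed

lemma BF_finite: "finite F \<Longrightarrow> finite (BF F)"
  using BF_sub[of F] finS by (meson finite_SigmaI finite_Un finite_imageI finite_subset)

lemma BF_card: assumes "finite F" shows "card (BF F) \<le> 2 * card F * card S"
proof -
  have "card (BF F) \<le> card ((\<lambda>(f,s). {f, s \<otimes> f}) ` (F \<times> S) \<union> (\<lambda>(f,s). {f, inv s \<otimes> f}) ` (F \<times> S))"
    using BF_sub assms finS by (intro card_mono) auto
  also have "\<dots> \<le> card ((\<lambda>(f,s). {f, s \<otimes> f}) ` (F \<times> S)) + card ((\<lambda>(f,s). {f, inv s \<otimes> f}) ` (F \<times> S))"
    by (rule card_Un_le)
  also have "\<dots> \<le> card (F \<times> S) + card (F \<times> S)"
    by (intro add_mono card_image_le) (use assms finS in auto)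
  finally show ?thesis by (simp add: card_cartesian_product)
qed

definition "Rset V = {real (card (BF F)) / real (card F) | F. F \<subseteq> carrier G \<and> finite F \<and> F \<noteq> {} \<and> real (card F) \<le> max V 1}"

lemma folner_Rset: "folner_profile G S V = Inf (Rset V)"
  unfolding folner_profile_def Rset_def by simp

lemma one_Rset: "real (card (BF {\<one>})) \<in> Rset V"
  unfolding Rset_def by (rule CollectI, rule exI[of _ "{\<one>}"]) auto

lemma Rset_nonneg: "r \<in> Rset V \<Longrightarrow> 0 \<le> r"
  unfolding Rset_def by auto

lemma folner_nonneg: "0 \<le> folner_profile G S V"
  unfolding folner_Rset using one_Rset Rset_nonneg by (intro cInf_greatest) auto

lemma folner_le: "folner_profile G S V \<le> 2 * real (card S)"
proof -
  have "folner_profile G S V \<le> real (card (BF {\<one>}))"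
    unfolding folner_Rset using one_Rset Rset_nonneg
    by (intro cInf_lower) (auto simp: bdd_below_def)
  also have "\<dots> \<le> 2 * real (card S)" using BF_card[of "{\<one>}"] by simp
  finally show ?thesis .
qed

lemma Rset_finite: "finite (Rset V)"
proof -
  define m where "m = nat \<lceil>max V 1\<rceil>"
  define K where "K = m * (2 * card S + 1)"
  have "Rset V \<subseteq> (\<lambda>(a,b). real a / real b) ` ({..K} \<times> {..K})"
  proof
    fix r assume "r \<in> Rset V"
    then obtain F where F: "r = real (card (BF F)) / real (card F)" "finite F" "real (card F) \<le> max V 1"
      unfolding Rset_def by auto
    have "real (card F) \<le> real m" unfolding m_def using F(3) by linarith
    hence cF: "card F \<le> m" by simp
    have mK: "m \<le> K" unfolding K_def by simp
    have "card F \<le> K" using cF mK by linarith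
    moreover have "2 * card F * card S \<le> 2 * m * card S" using cF by simp
    moreover have "2 * m * card S \<le> K" unfolding K_def by (simp add: algebra_simps)
    ultimately have "card F \<le> K" "card (BF F) \<le> K" using BF_card[OF F(2)] by linarith+
    thus "r \<in> (\<lambda>(a,b). real a / real b) ` ({..K} \<times> {..K})" using F(1) by force
  qed
  thus ?thesis by (rule finite_subset) auto
qed

lemma folner_attained:
  "\<exists>F. F \<subseteq> carrier G \<and> finite F \<and> F \<noteq> {} \<and> real (card F) \<le> max V 1 \<and>
      real (card (BF F)) / real (card F) = folner_profile G S V"
proof -
  have ne: "Rset V \<noteq> {}" using one_Rset by blast
  have "folner_profile G S V \<in> Rset V"
    unfolding folner_Rset cInf_eq_Min[OF Rset_finite ne] using Min_in[OF Rset_finite ne] .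
  thus ?thesis unfolding Rset_def by auto
qed

end


lemma card_filter_sum: "finite A \<Longrightarrow> card {x\<in>A. P x} = (\<Sum>x\<in>A. if P x then 1 else 0::nat)"
  using sum.inter_filter[of A "\<lambda>_. 1::nat" P] by simp

context sw_setup
begin

lemma coset_pre_card:
  assumes f: "f \<in> carrier G" and x: "x \<in> lcosets H"
  shows "card {y \<in> lcosets H. f <# y = x} = 1"
proof -
  have "{y \<in> lcosets H. f <# y = x} = {inv f <# x}"
    using L_inv[OF f] L_inv2[OF f x] L_mult[OF inv_closed[OF f] x] by auto
  thus ?thesis by simp
qed


lemma key_diff:
  assumes F: "F \<subseteq> carrier G" "finite F" and y: "y \<in> lcosets H" and u: "u \<in> lcosets H"
    and s: "s \<in> S" and v: "v = s <# u" "v \<noteq> u" and uvB: "u \<in> B" "v \<in> B"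
  shows "card {f\<in>F. f <# y = u} - card {f\<in>F. f <# y = v}
    \<le> card {c \<in> BF F. (\<exists>f\<in>F\<inter>c. f <# y \<in> B) \<and> (\<lambda>g. g <# y) ` c = {u,v}}"
proof -
  have sc: "s \<in> carrier G" using s SG by auto
  define Fu where "Fu = {f\<in>F. f <# y = u}"
  define Fv where "Fv = {f\<in>F. f <# y = v}"
  define A1 where "A1 = {f\<in>Fu. s \<otimes> f \<in> F}"
  define A2 where "A2 = {f\<in>Fu. s \<otimes> f \<notin> F}"
  define D where "D = {c \<in> BF F. (\<exists>f\<in>F\<inter>c. f <# y \<in> B) \<and> (\<lambda>g. g <# y) ` c = {u,v}}"
  have finFu: "finite Fu" "finite Fv" unfolding Fu_def Fv_def using F by auto
  have "Fu = A1 \<union> A2" "A1 \<inter> A2 = {}" unfolding A1_def A2_def by auto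
  hence cFu: "card Fu = card A1 + card A2" using finFu
    by (metis card_Un_disjoint finite_Un)
  have img: "(s \<otimes> f) <# y = v" if "f \<in> Fu" for f
  proof -
    have "f \<in> carrier G" "f <# y = u" using that F unfolding Fu_def by auto
    thus ?thesis using L_assoc[OF sc _ y, of f] v by simp
  qed
  have "card A1 = card ((\<lambda>f. s \<otimes> f) ` A1)"
    by (rule card_image[symmetric]) (use sc F in \<open>auto simp: inj_on_def A1_def Fu_def Units_eq subset_iff\<close>)
  also have "\<dots> \<le> card Fv"
    using finFu img by (intro card_mono) (auto simp: A1_def Fv_def)
  finally have c1: "card A1 \<le> card Fv" .
  have finD: "finite D" unfolding D_def using BF_finite[OF F(2)] by simp
  have "card A2 = card ((\<lambda>f. {f, s \<otimes> f}) ` A2)"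
    by (rule card_image[symmetric]) (auto simp: inj_on_def A2_def Fu_def doubleton_eq_iff)
  also have "\<dots> \<le> card D"
  proof (intro card_mono finD subsetI)
    fix c assume "c \<in> (\<lambda>f. {f, s \<otimes> f}) ` A2"
    then obtain f where f: "f \<in> A2" "c = {f, s \<otimes> f}" by auto
    have fF: "f \<in> F" "s \<otimes> f \<notin> F" "f <# y = u" using f unfolding A2_def Fu_def by auto
    have fc: "f \<in> carrier G" using fF F by auto
    have sf: "(s \<otimes> f) <# y = v" using img f unfolding A2_def by auto
    have ne: "s \<otimes> f \<noteq> f" using sf fF v by auto
    have "c \<in> cayley_edges G S" unfolding cayley_edges_def using f fc s ne by blast
    hence "c \<in> BF F" unfolding edge_boundary_def using f fF by blast
    moreover have "\<exists>f'\<in>F\<inter>c. f' <# y \<in> B" using fF f uvB by auto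
    moreover have "(\<lambda>g. g <# y) ` c = {u,v}" using f fF sf by auto
    ultimately show "c \<in> D" unfolding D_def by blast
  qed
  finally have c2: "card A2 \<le> card D" .
  show ?thesis using cFu c1 c2 unfolding Fu_def[symmetric] Fv_def[symmetric] D_def[symmetric] by linarith
qed


lemma cost_y:
  assumes F: "F \<subseteq> carrier G" "finite F" and B: "B \<subseteq> lcosets H" and y: "y \<in> lcosets H"
    and T: "finite T"
  shows "(\<Sum>t\<in>T. card (edges_between SE {x\<in>B. t \<le> card {f\<in>F. f <# y = x}}
                         (B - {x\<in>B. t \<le> card {f\<in>F. f <# y = x}})))
         \<le> card {c \<in> BF F. \<exists>f\<in>F\<inter>c. f <# y \<in> B}"
proof -
  have finB: "finite B" using B finL finite_subset by blast
  define psi where "psi x = card {f\<in>F. f <# y = x}" for x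
  define Lv where "Lv t = {x\<in>B. t \<le> psi x}" for t
  define Et where "Et t = edges_between SE (Lv t) (B - Lv t)" for t
  define SB where "SB = {e \<in> SE. e \<subseteq> B}"
  define D where "D e = {c\<in>BF F. (\<exists>f\<in>F\<inter>c. f <# y \<in> B) \<and> (\<lambda>g. g <# y) ` c = e}" for e
  have finSB: "finite SB" using finB unfolding SB_def by (rule rev_finite_subset[OF finite_Pow_iff[THEN iffD2]]) auto
  have EtSB: "Et t \<subseteq> SB" for t unfolding Et_def SB_def edges_between_def Lv_def by auto
  have finD: "finite (D e)" for e unfolding D_def using BF_finite[OF F(2)] by simp
  have "(\<Sum>t\<in>T. card (Et t)) = (\<Sum>t\<in>T. \<Sum>e\<in>SB. if e \<in> Et t then 1 else 0)"
  proof (rule sum.cong[OF refl])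
    fix t
    have "Et t = {e\<in>SB. e \<in> Et t}" using EtSB by auto
    hence "card (Et t) = card {e\<in>SB. e \<in> Et t}" by simp
    thus "card (Et t) = (\<Sum>e\<in>SB. if e \<in> Et t then 1 else 0)" using card_filter_sum[OF finSB] by simp
  qed
  also have "\<dots> = (\<Sum>e\<in>SB. \<Sum>t\<in>T. if e \<in> Et t then 1 else 0)" by (rule sum.swap)
  also have "\<dots> = (\<Sum>e\<in>SB. card {t\<in>T. e \<in> Et t})" using card_filter_sum[OF T] by simp
  also have "\<dots> \<le> (\<Sum>e\<in>SB. card (D e))"
  proof (rule sum_mono)
    fix e assume "e \<in> SB"
    then obtain x s where xs: "e = {x, s <# x}" "x \<in> lcosets H" "s \<in> S" "s <# x \<noteq> x" "e \<subseteq> B"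
      unfolding SB_def schreier_edges_def by auto
    define u where "u = x"
    define v where "v = s <# x"
    have uvB: "u \<in> B" "v \<in> B" using xs u_def v_def by auto
    have sc: "s \<in> carrier G" using xs SG by auto
    have vL: "v \<in> lcosets H" unfolding v_def using L_mult sc xs by auto
    have "{t\<in>T. e \<in> Et t} \<subseteq> {psi v<..psi u} \<union> {psi u<..psi v}"
    proof
      fix t assume "t \<in> {t\<in>T. e \<in> Et t}"
      then obtain a b where ab: "a \<in> Lv t" "b \<in> B - Lv t" "e = {a,b}"
        unfolding Et_def edges_between_def by auto
      have "(a = u \<and> b = v) \<or> (a = v \<and> b = u)" using ab xs u_def v_def by (auto simp: doubleton_eq_iff)
      thus "t \<in> {psi v<..psi u} \<union> {psi u<..psi v}" using ab unfolding Lv_def by auto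
    qed
    hence "card {t\<in>T. e \<in> Et t} \<le> card ({psi v<..psi u} \<union> {psi u<..psi v})"
      by (intro card_mono) auto
    also have "\<dots> \<le> (psi u - psi v) + (psi v - psi u)"
      using card_Un_le[of "{psi v<..psi u}" "{psi u<..psi v}"] by simp
    also have "\<dots> \<le> card (D e)"
    proof -
      have k1: "psi u - psi v \<le> card (D e)"
        unfolding psi_def D_def xs(1)
        using key_diff[OF F y xs(2) xs(3) refl xs(4)] uvB u_def v_def by simp
      have "inv s \<in> S" using Sinv xs by auto
      moreover have "u = inv s <# v" unfolding u_def v_def using L_inv sc xs by simp
      moreover have "u \<noteq> v" using xs u_def v_def by auto
      ultimately have "psi v - psi u \<le> card {c \<in> BF F. (\<exists>f\<in>F\<inter>c. f <# y \<in> B) \<and> (\<lambda>g. g <# y) ` c = {v,u}}"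
        unfolding psi_def using key_diff[OF F y vL, of "inv s" u B] uvB by simp
      also have "{v,u} = e" using xs u_def v_def by auto
      finally have k2: "psi v - psi u \<le> card (D e)" unfolding D_def .
      show ?thesis using k1 k2 by linarith
    qed
    finally show "card {t\<in>T. e \<in> Et t} \<le> card (D e)" .
  qed
  also have "\<dots> = card (\<Union>e\<in>SB. D e)"
    by (rule card_UN_disjoint[symmetric]) (use finSB finD in \<open>auto simp: D_def\<close>)
  also have "\<dots> \<le> card {c \<in> BF F. \<exists>f\<in>F\<inter>c. f <# y \<in> B}"
    by (intro card_mono) (use BF_finite[OF F(2)] in \<open>auto simp: D_def\<close>)
  finally show ?thesis unfolding Et_def Lv_def psi_def .
qed

lemma levelset:
  assumes F: "F \<subseteq> carrier G" "finite F" "F \<noteq> {}"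
    and B: "B \<subseteq> lcosets H" "B \<noteq> {}"
  shows "\<exists>P \<subseteq> B. P \<noteq> {} \<and> card P \<le> card F \<and>
           card F * card (edges_between SE P (B - P)) \<le> card (BF F) * card P"
proof -
  define L where "L = lcosets H"
  have finB: "finite B" using B finL finite_subset by blast
  define psi where "psi y x = card {f\<in>F. f <# y = x}" for y x
  define Lv where "Lv y t = {x \<in> B. t \<le> psi y x}" for y t
  define T where "T = {1..card F}"
  define gain where "gain p = card (Lv (fst p) (snd p))" for p
  define cost where "cost p = card (edges_between SE (Lv (fst p) (snd p)) (B - Lv (fst p) (snd p)))" for p
  define I where "I = L \<times> T"
  have finI: "finite I" unfolding I_def L_def T_def using finL by simp
  have psi_le: "psi y x \<le> card F" for y x unfolding psi_def using F(2) by (intro card_mono) auto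
  have G1: "(\<Sum>p\<in>I. gain p) = card B * card F"
  proof -
    have "(\<Sum>p\<in>I. gain p) = (\<Sum>y\<in>L. \<Sum>t\<in>T. card (Lv y t))"
      unfolding I_def gain_def by (simp add: sum.cartesian_product split_def)
    also have "\<dots> = (\<Sum>y\<in>L. \<Sum>x\<in>B. psi y x)"
    proof (rule sum.cong[OF refl])
      fix y
      have "(\<Sum>t\<in>T. card (Lv y t)) = (\<Sum>t\<in>T. \<Sum>x\<in>B. if t \<le> psi y x then 1 else 0)"
        unfolding Lv_def using finB by (simp add: card_filter_sum)
      also have "\<dots> = (\<Sum>x\<in>B. \<Sum>t\<in>T. if t \<le> psi y x then 1 else 0)" by (rule sum.swap)
      also have "\<dots> = (\<Sum>x\<in>B. psi y x)"
      proof (rule sum.cong[OF refl])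
        fix x
        have "(\<Sum>t\<in>T. if t \<le> psi y x then 1 else 0) = card {t\<in>T. t \<le> psi y x}"
          using card_filter_sum[of T "\<lambda>t. t \<le> psi y x"] unfolding T_def by simp
        also have "{t\<in>T. t \<le> psi y x} = {1..psi y x}" unfolding T_def using psi_le[of y x] by auto
        finally show "(\<Sum>t\<in>T. if t \<le> psi y x then 1 else 0) = psi y x" by simp
      qed
      finally show "(\<Sum>t\<in>T. card (Lv y t)) = (\<Sum>x\<in>B. psi y x)" .
    qed
    also have "\<dots> = (\<Sum>x\<in>B. \<Sum>y\<in>L. psi y x)" by (rule sum.swap)
    also have "\<dots> = (\<Sum>x\<in>B. card F)"
    proof (rule sum.cong[OF refl])
      fix x assume x: "x \<in> B"
      have "(\<Sum>y\<in>L. psi y x) = (\<Sum>y\<in>L. \<Sum>f\<in>F. if f <# y = x then 1 else 0)"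
        unfolding psi_def using F(2) by (simp add: card_filter_sum)
      also have "\<dots> = (\<Sum>f\<in>F. \<Sum>y\<in>L. if f <# y = x then 1 else 0)" by (rule sum.swap)
      also have "\<dots> = (\<Sum>f\<in>F. 1)"
      proof (rule sum.cong[OF refl])
        fix f assume "f \<in> F"
        hence "card {y \<in> L. f <# y = x} = 1" unfolding L_def using coset_pre_card F(1) x B(1) by auto
        thus "(\<Sum>y\<in>L. if f <# y = x then 1 else 0::nat) = 1"
          using finL unfolding L_def by (simp add: card_filter_sum)
      qed
      finally show "(\<Sum>y\<in>L. psi y x) = card F" by simp
    qed
    finally show ?thesis by simp
  qed
  have C1: "(\<Sum>p\<in>I. cost p) \<le> card (BF F) * card B"
  proof -
    have "(\<Sum>p\<in>I. cost p) = (\<Sum>y\<in>L. \<Sum>t\<in>T. cost (y,t))"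
      unfolding I_def by (simp add: sum.cartesian_product split_def)
    also have "\<dots> \<le> (\<Sum>y\<in>L. card {c \<in> BF F. \<exists>f\<in>F\<inter>c. f <# y \<in> B})"
    proof (rule sum_mono)
      fix y assume "y \<in> L"
      thus "(\<Sum>t\<in>T. cost (y,t)) \<le> card {c \<in> BF F. \<exists>f\<in>F\<inter>c. f <# y \<in> B}"
        unfolding cost_def Lv_def psi_def L_def T_def
        using cost_y[OF F(1,2) B(1), of y "{1..card F}"] by simp
    qed
    also have "\<dots> = (\<Sum>y\<in>L. \<Sum>c\<in>BF F. if (\<exists>f\<in>F\<inter>c. f <# y \<in> B) then 1 else 0)"
      using card_filter_sum[OF BF_finite[OF F(2)]] by simp
    also have "\<dots> = (\<Sum>c\<in>BF F. \<Sum>y\<in>L. if (\<exists>f\<in>F\<inter>c. f <# y \<in> B) then 1 else 0)"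
      by (rule sum.swap)
    also have "\<dots> = (\<Sum>c\<in>BF F. card {y\<in>L. \<exists>f\<in>F\<inter>c. f <# y \<in> B})"
      using card_filter_sum[of L] finL unfolding L_def by simp
    also have "\<dots> \<le> (\<Sum>c\<in>BF F. card B)"
    proof (rule sum_mono)
      fix c assume "c \<in> BF F"
      then obtain a b where ab: "c = {a,b}" "a \<in> F" "b \<notin> F" unfolding edge_boundary_def by auto
      have ac: "a \<in> carrier G" using ab F by auto
      have "{y\<in>L. \<exists>f\<in>F\<inter>c. f <# y \<in> B} \<subseteq> (\<lambda>x. inv a <# x) ` B"
      proof
        fix y assume "y \<in> {y\<in>L. \<exists>f\<in>F\<inter>c. f <# y \<in> B}"
        hence "y \<in> L" "a <# y \<in> B" using ab by auto
        moreover have "y = inv a <# (a <# y)" using L_inv ac \<open>y \<in> L\<close> unfolding L_def by simp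
        ultimately show "y \<in> (\<lambda>x. inv a <# x) ` B" by blast
      qed
      hence "card {y\<in>L. \<exists>f\<in>F\<inter>c. f <# y \<in> B} \<le> card ((\<lambda>x. inv a <# x) ` B)"
        using finB by (intro card_mono) auto
      also have "\<dots> \<le> card B" by (rule card_image_le[OF finB])
      finally show "card {y\<in>L. \<exists>f\<in>F\<inter>c. f <# y \<in> B} \<le> card B" .
    qed
    finally show ?thesis by simp
  qed
  have "\<exists>p\<in>I. 0 < gain p \<and> card F * cost p \<le> card (BF F) * gain p"
  proof (rule ccontr)
    assume no: "\<not> ?thesis"
    have le: "\<forall>p\<in>I. card (BF F) * gain p \<le> card F * cost p"
    proof
      fix p assume "p \<in> I"
      thus "card (BF F) * gain p \<le> card F * cost p" using no by (cases "gain p = 0") auto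
    qed
    have "card B * card F > 0" using finB B(2) F(2,3) by (simp add: card_gt_0_iff)
    hence "(\<Sum>p\<in>I. gain p) \<noteq> 0" using G1 by simp
    then obtain p where p: "p \<in> I" "gain p > 0" by (metis gr0I sum.neutral)
    hence lt: "card (BF F) * gain p < card F * cost p" using no by auto
    have "(\<Sum>p\<in>I. card (BF F) * gain p) < (\<Sum>p\<in>I. card F * cost p)"
      by (rule sum_strict_mono_ex1[OF finI le]) (use p lt in blast)
    hence "card (BF F) * (card B * card F) < card F * (\<Sum>p\<in>I. cost p)"
      by (simp add: sum_distrib_left[symmetric] G1)
    also have "\<dots> \<le> card F * (card (BF F) * card B)" using C1 by simp
    finally show False by simp
  qed
  then obtain y t where yt: "(y,t) \<in> I" "0 < gain (y,t)" "card F * cost (y,t) \<le> card (BF F) * gain (y,t)"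
    by auto
  have "Lv y t \<subseteq> (\<lambda>f. f <# y) ` F"
  proof
    fix x assume "x \<in> Lv y t"
    hence "1 \<le> psi y x" using yt(1) unfolding Lv_def I_def T_def by auto
    hence "{f\<in>F. f <# y = x} \<noteq> {}" unfolding psi_def by (metis card.empty not_one_le_zero)
    thus "x \<in> (\<lambda>f. f <# y) ` F" by auto
  qed
  hence "card (Lv y t) \<le> card F" using F(2) by (meson card_image_le card_mono finite_imageI le_trans)
  moreover have "Lv y t \<noteq> {}" using yt(2) unfolding gain_def by auto
  moreover have "Lv y t \<subseteq> B" unfolding Lv_def by auto
  ultimately show ?thesis using yt(3) unfolding gain_def cost_def by auto
qed

end


context sw_setup
begin

lemma greedy:
  assumes F: "F \<subseteq> carrier G" "finite F" "F \<noteq> {}" and B: "B \<subseteq> lcosets H"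
  shows "k \<le> card B \<Longrightarrow> \<exists>B1 \<subseteq> B. k \<le> card B1 \<and> card B1 < k + card F \<and>
           card F * card (edges_between SE B1 (B - B1)) \<le> card (BF F) * card B1"
proof (induction k)
  case 0
  have "card F > 0" using F by (simp add: card_gt_0_iff)
  moreover have "edges_between SE {} B = {}" by (simp add: edges_between_def)
  ultimately show ?case by (intro exI[of _ "{}"]) auto
next
  case (Suc k)
  have finB: "finite B" using B finL finite_subset by blast
  obtain B1 where B1: "B1 \<subseteq> B" "k \<le> card B1" "card B1 < k + card F"
    "card F * card (edges_between SE B1 (B - B1)) \<le> card (BF F) * card B1"
    using Suc by auto
  show ?case
  proof (cases "Suc k \<le> card B1")
    case True thus ?thesis using B1 by (intro exI[of _ B1]) auto
  next
    case False
    hence ck: "card B1 = k" using B1 by simp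
    have finB1: "finite B1" using B1 finB finite_subset by blast
    have "card (B - B1) = card B - k" using ck B1 finB1 by (simp add: card_Diff_subset)
    hence "card (B - B1) > 0" using Suc.prems by auto
    hence "B - B1 \<noteq> {}" by (metis card.empty less_irrefl)
    then obtain P where P: "P \<subseteq> B - B1" "P \<noteq> {}" "card P \<le> card F"
      "card F * card (edges_between SE P ((B - B1) - P)) \<le> card (BF F) * card P"
      using levelset[OF F, of "B - B1"] B by auto
    have finP: "finite P" using P finB finite_subset by (meson Diff_subset subset_trans)
    have cU: "card (B1 \<union> P) = k + card P" using ck P finB1 finP by (subst card_Un_disjoint) auto
    have cP: "card P \<ge> 1" using P finP by (simp add: Suc_leI card_gt_0_iff)
    have "edges_between SE (B1 \<union> P) (B - (B1 \<union> P))
        \<subseteq> edges_between SE B1 (B - B1) \<union> edges_between SE P ((B - B1) - P)"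
      unfolding edges_between_def by auto
    hence "card (edges_between SE (B1 \<union> P) (B - (B1 \<union> P)))
       \<le> card (edges_between SE B1 (B - B1) \<union> edges_between SE P ((B - B1) - P))"
      using finB finB1 finP by (intro card_mono finite_UnI finite_edges_between) auto
    also have "\<dots> \<le> card (edges_between SE B1 (B - B1)) + card (edges_between SE P ((B - B1) - P))"
      by (rule card_Un_le)
    finally have "card F * card (edges_between SE (B1 \<union> P) (B - (B1 \<union> P)))
       \<le> card F * card (edges_between SE B1 (B - B1)) + card F * card (edges_between SE P ((B - B1) - P))"
      by (metis add_mult_distrib2 mult_le_mono2)
    also have "\<dots> \<le> card (BF F) * card B1 + card (BF F) * card P" using B1 P by linarith
    also have "\<dots> = card (BF F) * card (B1 \<union> P)" using cU ck by (simp add: algebra_simps)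
    finally show ?thesis using cU cP P B1 by (intro exI[of _ "B1 \<union> P"]) auto
  qed
qed

lemma split_step:
  assumes B: "B \<subseteq> lcosets H" and six: "6 \<le> card B" and M1: "M' < real (card B)"
    and M2: "real (card B) \<le> 4/3 * M'"
  shows "\<exists>B1 B2. B = B1 \<union> B2 \<and> B1 \<inter> B2 = {} \<and> real (card B1) \<le> M' \<and> real (card B2) \<le> M' \<and>
     real (card (edges_between SE B1 B2)) \<le> folner_profile G S ((1/4) * M') * M'"
proof -
  have finB: "finite B" using B finL finite_subset by blast
  have M'pos: "M' \<ge> 4.5" using six M2 by linarith
  obtain F where F: "F \<subseteq> carrier G" "finite F" "F \<noteq> {}" "real (card F) \<le> max ((1/4) * M') 1"
    "real (card (BF F)) / real (card F) = folner_profile G S ((1/4) * M')"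
    using folner_attained by blast
  define m where "m = nat \<lfloor>M'\<rfloor>"
  have m1: "real m \<le> M'" "M' < real m + 1" unfolding m_def using M'pos by linarith+
  define k where "k = card B - m"
  have mB: "m < card B" using m1 M1 by linarith
  have kB: "k \<le> card B" unfolding k_def by simp
  obtain B1 where B1: "B1 \<subseteq> B" "k \<le> card B1" "card B1 < k + card F"
    "card F * card (edges_between SE B1 (B - B1)) \<le> card (BF F) * card B1"
    using greedy[OF F(1,2,3) B kB] by blast
  have finB1: "finite B1" using B1 finB finite_subset by blast
  have cB2: "card (B - B1) = card B - card B1" using B1 finB1 by (simp add: card_Diff_subset)
  have "card (B - B1) \<le> m" using cB2 B1(2) unfolding k_def by linarith
  hence c2: "real (card (B - B1)) \<le> M'" using m1 by linarith
  have rk: "real k = real (card B) - real m" unfolding k_def using mB by simp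
  have "real (card B1) + 1 \<le> real k + real (card F)" using B1(3) by linarith
  hence c1: "real (card B1) \<le> M'" using rk m1 M2 F(4) M'pos by (auto simp: max_def split: if_splits)
  have cFpos: "real (card F) > 0" using F by (simp add: card_gt_0_iff)
  have "real (card (edges_between SE B1 (B - B1)))
      \<le> real (card (BF F)) / real (card F) * real (card B1)"
  proof -
    have "real (card F) * real (card (edges_between SE B1 (B - B1))) \<le> real (card (BF F)) * real (card B1)"
      using B1(4) by (metis of_nat_le_iff of_nat_mult)
    thus ?thesis using cFpos by (simp add: field_simps)
  qed
  also have "\<dots> \<le> folner_profile G S ((1/4) * M') * M'"
    using F(5) c1 folner_nonneg by (simp add: mult_left_mono)
  finally show ?thesis using c1 c2 B1 by (intro exI[of _ B1] exI[of _ "B - B1"]) auto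
qed

end


context sw_setup
begin

definition "Tm A k = folner_profile G S ((1/4) * (3/4) ^ (Suc k) * real (card A)) * ((3/4) ^ (Suc k) * real (card A))"
definition "tail A j = (\<Sum>k. Tm A (k + j))"

lemma Tm_nonneg: "0 \<le> Tm A k"
  unfolding Tm_def using folner_nonneg by simp

lemma Tm_summable: "summable (Tm A)"
proof (rule summable_comparison_test)
  show "\<exists>N. \<forall>n\<ge>N. norm (Tm A n) \<le> (2 * real (card S) * real (card A) * (3/4)) * (3/4) ^ n"
  proof (intro exI allI impI)
    fix n :: nat
    have "norm (Tm A n) = Tm A n" using Tm_nonneg[of A n] by simp
    also have "\<dots> \<le> 2 * real (card S) * ((3/4) ^ (Suc n) * real (card A))"
      unfolding Tm_def by (intro mult_right_mono folner_le) auto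
    also have "\<dots> = (2 * real (card S) * real (card A) * (3/4)) * (3/4) ^ n" by simp
    finally show "norm (Tm A n) \<le> (2 * real (card S) * real (card A) * (3/4)) * (3/4) ^ n" .
  qed
  show "summable (\<lambda>n. (2 * real (card S) * real (card A) * (3/4)) * (3/4::real) ^ n)"
    by (intro summable_mult summable_geometric) simp
qed

lemma tail_step: "tail A j = Tm A j + tail A (Suc j)"
proof -
  have s: "summable (\<lambda>k. Tm A (k + j))" using summable_ignore_initial_segment[OF Tm_summable] by blast
  have "(\<Sum>n. Tm A (Suc n + j)) = tail A j - Tm A j"
    using suminf_split_head[OF s] unfolding tail_def by simp
  moreover have "(\<lambda>n. Tm A (Suc n + j)) = (\<lambda>n. Tm A (n + Suc j))" by simp
  ultimately show ?thesis unfolding tail_def by simp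
qed

lemma tail_nonneg: "0 \<le> tail A j"
  unfolding tail_def using summable_ignore_initial_segment[OF Tm_summable] Tm_nonneg
  by (intro suminf_nonneg) auto

lemma main:
  assumes "B \<subseteq> lcosets H" "real (card B) \<le> (3/4) ^ j * real (card A)"
  shows "real (sweepwidth SE B) \<le> 6 + 2 * tail A j"
  using assms
proof (induction "card B" arbitrary: B j rule: less_induct)
  case less
  have finB: "finite B" using less.prems finL finite_subset by blast
  show ?case
  proof (cases "card B \<le> 5")
    case True
    thus ?thesis using sweepwidth_small[OF finB True, of SE] tail_nonneg[of A j] by simp
  next
    case False
    hence six: "6 \<le> card B" by simp
    obtain n where n: "(3/4::real) ^ n < 6 / (real (card A) + 1)"
      using real_arch_pow_inv[of "6 / (real (card A) + 1)" "3/4"] by auto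
    have n': "(3/4::real) ^ n * real (card A) < 6"
    proof -
      have "(3/4::real) ^ n * real (card A) \<le> (3/4) ^ n * (real (card A) + 1)" by simp
      also have "\<dots> < 6" using n by (simp add: field_simps)
      finally show ?thesis .
    qed
    have inner: "\<forall>j. real (card B) \<le> (3/4) ^ j * real (card A) \<longrightarrow>
        (3/4) ^ (j + d) * real (card A) < real (card B) \<longrightarrow>
        real (sweepwidth SE B) \<le> 6 + 2 * tail A j" for d
    proof (induction d)
      case 0 thus ?case by simp
    next
      case (Suc d)
      show ?case
      proof (intro allI impI)
        fix j assume j1: "real (card B) \<le> (3/4) ^ j * real (card A)"
          and j2: "(3/4) ^ (j + Suc d) * real (card A) < real (card B)"
        show "real (sweepwidth SE B) \<le> 6 + 2 * tail A j"
        proof (cases "real (card B) \<le> (3/4) ^ (Suc j) * real (card A)")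
          case True
          have "real (sweepwidth SE B) \<le> 6 + 2 * tail A (Suc j)"
            using Suc.IH True j2 by (simp add: add.commute)
          thus ?thesis using tail_step[of A j] Tm_nonneg[of A j] by linarith
        next
          case False
          define M' where "M' = (3/4) ^ (Suc j) * real (card A)"
          have M1: "M' < real (card B)" using False M'_def by simp
          have M2: "real (card B) \<le> 4/3 * M'" using j1 unfolding M'_def by (simp add: mult.commute)
          obtain B1 B2 where sp: "B = B1 \<union> B2" "B1 \<inter> B2 = {}" "real (card B1) \<le> M'"
            "real (card B2) \<le> M'" "real (card (edges_between SE B1 B2)) \<le> folner_profile G S ((1/4) * M') * M'"
            using split_step[OF less.prems(1) six M1 M2] by blast
          have sub: "B1 \<subseteq> lcosets H" "B2 \<subseteq> lcosets H" using sp less.prems by auto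
          have lt: "card B1 < card B" "card B2 < card B" using sp M1 by linarith+
          have ih1: "real (sweepwidth SE B1) \<le> 6 + 2 * tail A (Suc j)"
            using less.hyps[OF lt(1) sub(1)] sp(3) M'_def by simp
          have ih2: "real (sweepwidth SE B2) \<le> 6 + 2 * tail A (Suc j)"
            using less.hyps[OF lt(2) sub(2)] sp(4) M'_def by simp
          have fin12: "finite B1" "finite B2" using sp finB by auto
          have "sweepwidth SE B \<le> max (sweepwidth SE B1) (sweepwidth SE B2) + card (edges_between SE B1 B2)"
            using sweepwidth_split[OF fin12 sp(2), of SE] sp(1) by simp
          hence "real (sweepwidth SE B) \<le> max (real (sweepwidth SE B1)) (real (sweepwidth SE B2)) + real (card (edges_between SE B1 B2))"
            by (metis of_nat_add of_nat_le_iff of_nat_max)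
          also have "\<dots> \<le> 6 + 2 * tail A (Suc j) + Tm A j"
            using ih1 ih2 sp(5) unfolding Tm_def M'_def by (simp add: mult.assoc)
          finally show ?thesis using tail_step[of A j] Tm_nonneg[of A j] by linarith
        qed
      qed
    qed
    have "(3/4::real) ^ (j + n) * real (card A) \<le> (3/4) ^ n * real (card A)"
      by (intro mult_right_mono power_decreasing) auto
    hence "(3/4::real) ^ (j + n) * real (card A) < real (card B)" using n' six by linarith
    thus ?thesis using inner[of n] less.prems by blast
  qed
qed

end

theorem theorem2p6:
  fixes G :: "('g, 'm) monoid_scheme" and S H :: "'g set" and A :: "'g set set"
  assumes "group G"
    and "finite S" and "S \<subseteq> carrier G" and "\<forall>s\<in>S. inv\<^bsub>G\<^esub> s \<in> S"
    and "generate G S = carrier G"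
    and "subgroup H G" and "finite (lcosets\<^bsub>G\<^esub> H)"
    and "A \<subseteq> lcosets\<^bsub>G\<^esub> H"
  shows "real (sweepwidth (schreier_edges G S H) A)
    \<le> 6 + 2 * (\<Sum>k. folner_profile G S ((1/4) * (3/4) ^ (Suc k) * real (card A))
                   * ((3/4) ^ (Suc k) * real (card A)))"
proof -
  interpret sw_setup G S H
    using assms by (simp add: sw_setup_def sw_setup_axioms_def)
  have "real (sweepwidth (schreier_edges G S H) A) \<le> 6 + 2 * tail A 0"
    using main[of A 0 A] assms(8) by simp
  thus ?thesis unfolding tail_def Tm_def by simp
qed


end
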